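(* Let $k,l\geq 1$ be integers. Then $K(\mathbb{Z}_{2^l}^{2^k})$ is the trivial subgroup $\{(0,0,\dots,0)\}$ of $\mathbb{Z}_{2^l}^{2^k}$.
   Context: For integers $m\ge 2$, $n\ge 2$, the Ducci function $D:\mathbb{Z}_m^n\to\mathbb{Z}_m^n$ is $D(x_1,\dots,x_n)=(x_1+x_2 \bmod m,\dots,x_{n-1}+x_n\bmod m,x_n+x_1\bmod m)$. The Ducci cycle of $\mathbf{u}\in\mathbb{Z}_m^n$ is the set of $\mathbf{v}$ such that there exist integers $\alpha\ge 0$, $\beta\ge 1$ with $\mathbf{v}=D^{\alpha+\beta}(\mathbf{u})=D^{\alpha}(\mathbf{u})$. $K(\mathbb{Z}_m^n)$ denotes the set of all tuples in $\mathbb{Z}_m^n$ lying in the Ducci cycle of some $\mathbf{u}\in\mathbb{Z}_m^n$. *)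

theory Defs
  imports Main
begin

text \<open>Tuples in Z_m^n are represented as functions nat => nat with entries
  in {0..<m} on the indices {0..<n} (0-based) and 0 outside.\<close>

definition tuples :: "nat \<Rightarrow> nat \<Rightarrow> (nat \<Rightarrow> nat) set" where
  "tuples m n = {x. (\<forall>i<n. x i < m) \<and> (\<forall>i\<ge>n. x i = 0)}"

definition ducci :: "nat \<Rightarrow> nat \<Rightarrow> (nat \<Rightarrow> nat) \<Rightarrow> (nat \<Rightarrow> nat)" where
  "ducci m n x = (\<lambda>i. if i < n then (x i + x (Suc i mod n)) mod m else 0)"

definition ducci_cycle :: "nat \<Rightarrow> nat \<Rightarrow> (nat \<Rightarrow> nat) \<Rightarrow> (nat \<Rightarrow> nat) set" where
  "ducci_cycle m n u = {v. \<exists>\<alpha> \<beta>. \<beta> \<ge> 1 \<and>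
      v = (ducci m n ^^ (\<alpha> + \<beta>)) u \<and> v = (ducci m n ^^ \<alpha>) u}"

definition K :: "nat \<Rightarrow> nat \<Rightarrow> (nat \<Rightarrow> nat) set" where
  "K m n = (\<Union>u\<in>tuples m n. ducci_cycle m n u)"

end

theory Submission
  imports Defs
begin

definition E :: "(nat \<Rightarrow> int) \<Rightarrow> nat \<Rightarrow> int" where
  "E x = (\<lambda>i. x i + x (Suc i))"

lemma E_Suc: "(E ^^ Suc t) x i = (E ^^ t) x i + (E ^^ t) x (Suc i)"
  by (simp only: funpow.simps comp_apply E_def)

lemma E_lin: "(E ^^ t) (\<lambda>i. c * y i) = (\<lambda>i. c * (E ^^ t) y i)"
  by (induction t) (auto simp: E_def algebra_simps)

lemma E_per:
  assumes "\<And>i. x (i + n) = x i"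
  shows "(E ^^ t) x (i + n) = (E ^^ t) x i"
  using assms
proof (induction t arbitrary: i)
  case 0 then show ?case by simp
next
  case (Suc t)
  have "(E ^^ t) x (Suc i + n) = (E ^^ t) x (Suc i)" using Suc by blast
  then show ?case using Suc by (simp only: E_Suc add_Suc)
qed

lemma E_even: "even ((E ^^ (2 ^ k)) x i - x i - x (i + 2 ^ k))"
proof (induction k arbitrary: x i)
  case 0 then show ?case by (simp add: E_def)
next
  case (Suc k)
  let ?m = "2 ^ k :: nat"
  let ?A = "E ^^ ?m"
  have mm: "(2 ^ Suc k :: nat) = ?m + ?m" by simp
  have fa: "E ^^ (2 ^ Suc k) = ?A \<circ> ?A" unfolding mm by (rule funpow_add)
  have e1: "even (?A (?A x) i - ?A x i - ?A x (i + ?m))" using Suc by blast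
  have e2: "even (?A x i - x i - x (i + ?m))" using Suc by blast
  have e3: "even (?A x (i + ?m) - x (i + ?m) - x (i + ?m + ?m))" using Suc by blast
  have eq: "?A (?A x) i - x i - x (i + 2 ^ Suc k) =
     (?A (?A x) i - ?A x i - ?A x (i + ?m)) + (?A x i - x i - x (i + ?m))
     + (?A x (i + ?m) - x (i + ?m) - x (i + ?m + ?m)) + 2 * x (i + ?m)"
    unfolding mm by (simp only: add.assoc)
  have "even (?A (?A x) i - x i - x (i + 2 ^ Suc k))" unfolding eq by (intro dvd_add e1 e2 e3 dvd_triv_left)
  then show ?case unfolding fa by simp
qed

lemma E_dvd:
  assumes "\<And>i. (2::int) ^ j dvd x i"
  shows "(2::int) ^ (j + 1) dvd ((E ^^ (2 ^ k)) x i - x i - x (i + 2 ^ k))"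
proof -
  define y where "y = (\<lambda>i. x i div 2 ^ j)"
  have xy: "x = (\<lambda>i. 2 ^ j * y i)" using assms unfolding y_def by auto
  have "(E ^^ (2 ^ k)) x i - x i - x (i + 2 ^ k) = 2 ^ j * ((E ^^ (2 ^ k)) y i - y i - y (i + 2 ^ k))"
    unfolding xy E_lin by (simp add: algebra_simps)
  moreover have "even ((E ^^ (2 ^ k)) y i - y i - y (i + 2 ^ k))" by (rule E_even)
  ultimately show ?thesis by (auto simp: mult_dvd_mono)
qed

lemma E_step:
  assumes "\<And>i. (2::int) ^ j dvd x i" and "\<And>i. x (i + 2 ^ k) = x i"
  shows "(2::int) ^ (j + 1) dvd (E ^^ (2 ^ k)) x i"
proof -
  have a: "(2::int) ^ (j + 1) dvd ((E ^^ (2 ^ k)) x i - x i - x (i + 2 ^ k))"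
    using E_dvd assms(1) by blast
  have b: "(2::int) ^ (j + 1) dvd 2 * x i" using assms(1) by simp
  have "(E ^^ (2 ^ k)) x i = ((E ^^ (2 ^ k)) x i - x i - x (i + 2 ^ k)) + 2 * x i"
    using assms(2) by simp
  then show ?thesis using a b by (metis dvd_add)
qed

lemma E_iter:
  assumes "\<And>i. x (i + 2 ^ k) = x i"
  shows "(2::int) ^ j dvd (E ^^ (2 ^ k * j)) x i"
proof (induction j arbitrary: i)
  case 0 then show ?case by simp
next
  case (Suc j)
  have fa: "E ^^ (2 ^ k * Suc j) = (E ^^ (2 ^ k)) \<circ> (E ^^ (2 ^ k * j))"
    by (simp add: funpow_add[symmetric])
  have p: "\<And>i. (E ^^ (2 ^ k * j)) x (i + 2 ^ k) = (E ^^ (2 ^ k * j)) x i"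
    using E_per assms by blast
  show ?case unfolding fa using E_step[of j "(E ^^ (2 ^ k * j)) x" k i, OF Suc p] by simp
qed

lemma ducci_Suc: "(ducci M n ^^ Suc t) u i = (if i < n then ((ducci M n ^^ t) u i + (ducci M n ^^ t) u (Suc i mod n)) mod M else 0)"
  by (simp only: funpow.simps comp_apply ducci_def)

lemma ducci_E:
  assumes "0 < n" "0 < M" "u \<in> tuples M n" "i < n"
  shows "int ((ducci M n ^^ t) u i) = (E ^^ t) (\<lambda>i. int (u (i mod n))) i mod int M"
  using assms(4)
proof (induction t arbitrary: i)
  case 0
  then show ?case using assms(3) by (simp add: tuples_def)
next
  case (Suc t)
  let ?x = "\<lambda>i. int (u (i mod n))"
  have per: "\<And>i. ?x (i + n) = ?x i" by simp
  have p2: "(E ^^ t) ?x (Suc i mod n) = (E ^^ t) ?x (Suc i)"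
  proof -
    have "\<And>q r. (E ^^ t) ?x (r + n * q) = (E ^^ t) ?x r"
    proof -
      fix q r show "(E ^^ t) ?x (r + n * q) = (E ^^ t) ?x r"
      proof (induction q)
        case 0 then show ?case by simp
      next
        case (Suc q)
        have "(E ^^ t) ?x (r + n * q + n) = (E ^^ t) ?x (r + n * q)"
          using E_per[of ?x n t] per by blast
        then show ?case using Suc by (metis add.left_commute add.commute mult_Suc_right)
      qed
    qed
    then show ?thesis by (metis mod_mult_div_eq)
  qed
  have "Suc i mod n < n" using assms(1) by simp
  then have h2: "int ((ducci M n ^^ t) u (Suc i mod n)) = (E ^^ t) ?x (Suc i) mod int M"
    using Suc.IH p2 by simp
  have h1: "int ((ducci M n ^^ t) u i) = (E ^^ t) ?x i mod int M" using Suc by blast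
  have "int ((ducci M n ^^ Suc t) u i) =
      (int ((ducci M n ^^ t) u i) + int ((ducci M n ^^ t) u (Suc i mod n))) mod int M"
    using Suc.prems by (simp only: ducci_Suc if_True zmod_int of_nat_add)
  also have "\<dots> = ((E ^^ t) ?x i + (E ^^ t) ?x (Suc i)) mod int M"
    unfolding h1 h2 by (simp add: mod_add_eq)
  also have "\<dots> = (E ^^ Suc t) ?x i mod int M" by (simp only: E_Suc)
  finally show ?case by this
qed

lemma ducci_zero_pow: "(ducci M n ^^ t) (\<lambda>_. 0) = (\<lambda>_. 0)"
proof (induction t)
  case 0 then show ?case by simp
next
  case (Suc t)
  show ?case by (rule ext) (simp only: ducci_Suc Suc.IH, simp)
qed

lemma ducci_kill:
  assumes "1 \<le> l" "u \<in> tuples (2 ^ l) (2 ^ k)"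
  shows "(ducci (2 ^ l) (2 ^ k) ^^ (2 ^ k * l)) u = (\<lambda>_. 0)"
proof
  fix i
  let ?n = "2 ^ k :: nat" and ?M = "2 ^ l :: nat"
  show "(ducci ?M ?n ^^ (?n * l)) u i = 0"
  proof (cases "i < ?n")
    case True
    let ?x = "\<lambda>i. int (u (i mod ?n))"
    have "int ((ducci ?M ?n ^^ (?n * l)) u i) = (E ^^ (?n * l)) ?x i mod int ?M"
      using ducci_E[OF _ _ assms(2) True] by simp
    moreover have "(2::int) ^ l dvd (E ^^ (?n * l)) ?x i"
      by (rule E_iter) simp
    ultimately show ?thesis by simp
  next
    case False
    have "0 < ?n * l" using assms(1) by simp
    then obtain s where "?n * l = Suc s" using gr0_implies_Suc by blast
    then show ?thesis using False by (simp only: ducci_Suc if_False)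
  qed
qed

theorem corollary1p3:
  fixes k l :: nat
  assumes "k \<ge> 1" and "l \<ge> 1"
  shows "K (2 ^ l) (2 ^ k) = {(\<lambda>_. 0)}"
proof
  let ?D = "ducci (2 ^ l) (2 ^ k)"
  show "K (2 ^ l) (2 ^ k) \<subseteq> {(\<lambda>_. 0)}"
  proof
    fix v assume "v \<in> K (2 ^ l) (2 ^ k)"
    then obtain u a b where u: "u \<in> tuples (2 ^ l) (2 ^ k)" and b: "b \<ge> 1"
      and v1: "v = (?D ^^ (a + b)) u" and v2: "v = (?D ^^ a) u"
      unfolding K_def ducci_cycle_def by blast
    have rep: "(?D ^^ (a + b * c)) u = v" for c
    proof (induction c)
      case 0 then show ?case using v2 by simp
    next
      case (Suc c)
      have "(?D ^^ (a + b * Suc c)) u = (?D ^^ (b * c + (a + b))) u"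
        by (simp add: algebra_simps)
      also have "\<dots> = (?D ^^ (b * c)) ((?D ^^ (a + b)) u)"
        by (simp only: funpow_add comp_apply)
      also have "\<dots> = (?D ^^ (b * c)) ((?D ^^ a) u)" using v1 v2 by simp
      also have "\<dots> = (?D ^^ (b * c + a)) u"
        by (simp only: funpow_add comp_apply)
      also have "\<dots> = (?D ^^ (a + b * c)) u"
        by (simp add: algebra_simps)
      finally show ?case using Suc by simp
    qed
    let ?N = "2 ^ k * l"
    have "a + b * ?N = (a + b * ?N - ?N) + ?N" using b by (simp add: le_add2 trans_le_add2)
    then have "(?D ^^ (a + b * ?N)) u = (?D ^^ (a + b * ?N - ?N)) ((?D ^^ ?N) u)"
      by (metis funpow_add comp_apply)
    also have "\<dots> = (\<lambda>_. 0)" using ducci_kill[OF assms(2) u] ducci_zero_pow by simp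
    finally show "v \<in> {(\<lambda>_. 0)}" using rep by simp
  qed
next
  let ?D = "ducci (2 ^ l) (2 ^ k)"
  have "(\<lambda>_. 0) \<in> tuples (2 ^ l) (2 ^ k)" by (simp add: tuples_def)
  moreover have "(\<lambda>_. 0) \<in> ducci_cycle (2 ^ l) (2 ^ k) (\<lambda>_. 0)"
    unfolding ducci_cycle_def using ducci_zero_pow
    by (metis (mono_tags, lifting) mem_Collect_eq order_refl)
  ultimately show "{(\<lambda>_. 0)} \<subseteq> K (2 ^ l) (2 ^ k)" unfolding K_def by blast
qed

end
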